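(* Let $0<s<1$ and let $\{\gamma_j\}_{j\in\mathbb N}$ be a non-increasing sequence with $1\ge\gamma_1$, $\gamma_j>0$ for all $j$, and $\lim_{j\to\infty}\gamma_j=0$. Then $$\lim_{\varepsilon\to0}\frac{d(\varepsilon)^{1-s}}{(\ln\varepsilon^{-1})^{s}}=0\quad\text{if and only if}\quad \lim_{j\to\infty}\frac{(\ln\frac1{\gamma_j})^{s}}{j^{1-s}}=\infty.$$
   Context: For $\varepsilon\in(0,1)$, $d(\varepsilon)=\max\{d\in\mathbb N:\gamma_d>\varepsilon^2\}$, with $d(\varepsilon)=0$ if $\gamma_1\le\varepsilon^2$. *)

theory Defs
  imports "HOL-Analysis.Analysis"
begin

text \<open>The sequence gamma is indexed by j = 1, 2, ...; the value gamma 0 is irrelevant.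
  d(eps) = max{d >= 1 : gamma_d > eps^2}, and 0 if gamma_1 <= eps^2.\<close>
definition d_eps :: "(nat \<Rightarrow> real) \<Rightarrow> real \<Rightarrow> nat" where
  "d_eps \<gamma> \<epsilon> = (if \<gamma> 1 \<le> \<epsilon>^2 then 0 else Max {d. 1 \<le> d \<and> \<gamma> d > \<epsilon>^2})"

end

theory Submission
  imports Defs
begin

lemma d_fin:
  fixes \<gamma> :: "nat \<Rightarrow> real"
  assumes "\<gamma> \<longlonglongrightarrow> 0" "\<epsilon> > 0"
  shows "finite {d. 1 \<le> d \<and> \<gamma> d > \<epsilon>^2}"
proof -
  have "eventually (\<lambda>n. \<gamma> n < \<epsilon>^2) sequentially"
    using order_tendstoD(2)[OF assms(1)] assms(2) by simp
  then obtain N where N: "\<And>n. n \<ge> N \<Longrightarrow> \<gamma> n < \<epsilon>^2"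
    unfolding eventually_sequentially by blast
  have "{d. 1 \<le> d \<and> \<gamma> d > \<epsilon>^2} \<subseteq> {..N}"
    using N by (auto simp: not_le[symmetric]) (meson less_asym nat_le_linear not_le)
  then show ?thesis using finite_subset by blast
qed

lemma d_ge:
  fixes \<gamma> :: "nat \<Rightarrow> real"
  assumes "\<gamma> \<longlonglongrightarrow> 0" "\<epsilon> > 0"
    and mono: "\<And>i j. 1 \<le> i \<Longrightarrow> i \<le> j \<Longrightarrow> \<gamma> j \<le> \<gamma> i"
    and "1 \<le> j" "\<gamma> j > \<epsilon>^2"
  shows "j \<le> d_eps \<gamma> \<epsilon>"
proof -
  have "\<gamma> 1 > \<epsilon>^2" using mono[of 1 j] assms(4,5) by simp
  then have "d_eps \<gamma> \<epsilon> = Max {d. 1 \<le> d \<and> \<gamma> d > \<epsilon>^2}" unfolding d_eps_def by simp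
  then show ?thesis using Max_ge[OF d_fin[OF assms(1,2)]] assms(4,5) by simp
qed

lemma d_mem:
  fixes \<gamma> :: "nat \<Rightarrow> real"
  assumes "\<gamma> \<longlonglongrightarrow> 0" "\<epsilon> > 0" "d_eps \<gamma> \<epsilon> \<ge> 1"
  shows "\<gamma> (d_eps \<gamma> \<epsilon>) > \<epsilon>^2"
proof -
  have g1: "\<not> \<gamma> 1 \<le> \<epsilon>^2" using assms(3) unfolding d_eps_def by (auto split: if_splits)
  then have e: "d_eps \<gamma> \<epsilon> = Max {d. 1 \<le> d \<and> \<gamma> d > \<epsilon>^2}" unfolding d_eps_def by simp
  have "{d. 1 \<le> d \<and> \<gamma> d > \<epsilon>^2} \<noteq> {}" using g1 by auto
  from Max_in[OF d_fin[OF assms(1,2)] this] show ?thesis unfolding e[symmetric] by simp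
qed

theorem lemma3:
  fixes s :: real and \<gamma> :: "nat \<Rightarrow> real"
  assumes "0 < s" and "s < 1"
    and "\<And>i j. 1 \<le> i \<Longrightarrow> i \<le> j \<Longrightarrow> \<gamma> j \<le> \<gamma> i"
    and "\<gamma> 1 \<le> 1"
    and "\<And>j. 1 \<le> j \<Longrightarrow> \<gamma> j > 0"
    and "\<gamma> \<longlonglongrightarrow> 0"
  shows "((\<lambda>\<epsilon>. real (d_eps \<gamma> \<epsilon>) powr (1 - s) / (ln (1 / \<epsilon>)) powr s) \<longlongrightarrow> 0) (at_right 0)
     \<longleftrightarrow> filterlim (\<lambda>j. (ln (1 / \<gamma> j)) powr s / real j powr (1 - s)) at_top sequentially"
proof
  define f where "f = (\<lambda>\<epsilon>. real (d_eps \<gamma> \<epsilon>) powr (1 - s) / (ln (1 / \<epsilon>)) powr s)"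
  assume "((\<lambda>\<epsilon>. real (d_eps \<gamma> \<epsilon>) powr (1 - s) / (ln (1 / \<epsilon>)) powr s) \<longlongrightarrow> 0) (at_right 0)"
  then have fl: "(f \<longlongrightarrow> 0) (at_right 0)" unfolding f_def .
  have gl: "filterlim \<gamma> (at_right 0) sequentially"
    unfolding filterlim_at using assms(5,6)
    by (auto simp: eventually_sequentially intro!: exI[of _ 1] less_imp_neq[symmetric])
  have fg: "((\<lambda>j. f (\<gamma> j)) \<longlongrightarrow> 0) sequentially"
    using filterlim_compose[OF fl gl] .
  have ev1: "eventually (\<lambda>j. \<gamma> j < 1) sequentially"
    using order_tendstoD(2)[OF assms(6)] by simp
  have ev: "eventually (\<lambda>j. j \<ge> 1 \<and> \<gamma> j < 1) sequentially"
    using ev1 eventually_ge_at_top[of 1] by eventually_elim auto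
  have pos: "eventually (\<lambda>j. 0 < real j powr (1 - s) / ln (1 / \<gamma> j) powr s) sequentially"
    using ev
  proof eventually_elim
    case (elim j)
    have "\<gamma> j > 0" using assms(5) elim by auto
    then have "ln (1 / \<gamma> j) > 0" using elim by simp
    then show ?case using elim by simp
  qed
  have up: "eventually (\<lambda>j. real j powr (1 - s) / ln (1 / \<gamma> j) powr s \<le> f (\<gamma> j)) sequentially"
    using ev
  proof eventually_elim
    case (elim j)
    have gp: "\<gamma> j > 0" using assms(5) elim by auto
    then have "\<gamma> j ^ 2 < \<gamma> j" using elim by (simp add: power2_eq_square)
    then have "j \<le> d_eps \<gamma> (\<gamma> j)" using d_ge[OF assms(6) gp assms(3) _] elim by auto
    then have "real j powr (1 - s) \<le> real (d_eps \<gamma> (\<gamma> j)) powr (1 - s)"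
      using assms(2) by (intro powr_mono2) auto
    then show ?case unfolding f_def by (intro divide_right_mono) auto
  qed
  have "((\<lambda>j. real j powr (1 - s) / ln (1 / \<gamma> j) powr s) \<longlongrightarrow> 0) sequentially"
    by (rule tendsto_sandwich[OF _ up tendsto_const fg]) (use pos in \<open>eventually_elim, simp\<close>)
  from filterlim_inverse_at_top[OF this pos]
  show "filterlim (\<lambda>j. (ln (1 / \<gamma> j)) powr s / real j powr (1 - s)) at_top sequentially"
    by simp
next
  assume G: "filterlim (\<lambda>j. (ln (1 / \<gamma> j)) powr s / real j powr (1 - s)) at_top sequentially"
  show "((\<lambda>\<epsilon>. real (d_eps \<gamma> \<epsilon>) powr (1 - s) / (ln (1 / \<epsilon>)) powr s) \<longlongrightarrow> 0) (at_right 0)"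
    unfolding tendsto_iff
  proof (intro allI impI)
    fix e :: real assume e: "e > 0"
    define K where "K = 2 * 2 powr s / e"
    have Kp: "K > 0" using e by (simp add: K_def)
    have "eventually (\<lambda>j. K \<le> (ln (1 / \<gamma> j)) powr s / real j powr (1 - s)) sequentially"
      using G unfolding filterlim_at_top by blast
    then obtain J0 where J0: "\<And>j. j \<ge> J0 \<Longrightarrow> K \<le> (ln (1 / \<gamma> j)) powr s / real j powr (1 - s)"
      unfolding eventually_sequentially by blast
    define J where "J = max J0 1"
    have JJ: "\<And>j. j \<ge> J \<Longrightarrow> j \<ge> 1 \<and> K \<le> (ln (1 / \<gamma> j)) powr s / real j powr (1 - s)"
      using J0 unfolding J_def by auto
    define B where "B = (real J powr (1 - s) / e) powr (1 / s)"
    have B0: "B \<ge> 0" unfolding B_def by simp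
    have BB: "B powr s = real J powr (1 - s) / e"
      unfolding B_def using assms(1) e by (simp add: powr_powr)
    define b where "b = min 1 (exp (- B))"
    have bp: "b > 0" unfolding b_def by simp
    show "eventually (\<lambda>\<epsilon>. dist (real (d_eps \<gamma> \<epsilon>) powr (1 - s) / (ln (1 / \<epsilon>)) powr s) 0 < e) (at_right 0)"
      unfolding eventually_at_right[OF bp]
    proof (intro exI[of _ b] conjI allI impI)
      show "0 < b" by (rule bp)
      fix \<epsilon> :: real assume ep: "\<epsilon> > 0" and eb: "\<epsilon> < b"
      define L where "L = ln (1 / \<epsilon>)"
      have "\<epsilon> < exp (- B)" using eb unfolding b_def by simp
      then have "ln \<epsilon> < - B" using ep by (metis ln_less_cancel_iff exp_gt_zero ln_exp)
      then have LB: "L > B" unfolding L_def using ep by (simp add: ln_div)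
      then have Lp: "L > 0" using B0 by simp
      have LsB: "L powr s > real J powr (1 - s) / e"
        using powr_less_mono2[OF assms(1) B0 LB] BB by simp
      have Lsp: "L powr s > 0" using Lp by simp
      define d where "d = d_eps \<gamma> \<epsilon>"
      have fnn: "real d powr (1 - s) / L powr s \<ge> 0" by simp
      have "real d powr (1 - s) / L powr s < e"
      proof (cases "d < J")
        case True
        have "real d powr (1 - s) \<le> real J powr (1 - s)"
          using True assms(2) by (intro powr_mono2) auto
        also have "\<dots> < e * L powr s" using LsB e by (simp add: field_simps)
        finally show ?thesis using Lsp by (simp add: field_simps)
      next
        case False
        then have dJ: "d \<ge> J" by simp
        with JJ have d1: "d \<ge> 1" and Kd: "K \<le> (ln (1 / \<gamma> d)) powr s / real d powr (1 - s)" by auto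
        have gd: "\<gamma> d > \<epsilon>^2" using d_mem[OF assms(6) ep] d1 unfolding d_def by simp
        have gdp: "\<gamma> d > 0" using assms(5) d1 by simp
        have "\<gamma> d \<le> 1" using assms(3)[OF _ d1] assms(4) by (meson le_numeral_extra(4) order_trans)
        define a where "a = ln (1 / \<gamma> d)"
        have a0: "a \<ge> 0" unfolding a_def using gdp \<open>\<gamma> d \<le> 1\<close> by simp
        have dp: "real d powr (1 - s) > 0" using d1 by simp
        have "a < ln (1 / \<epsilon>^2)" unfolding a_def using gdp gd ep
          by (intro ln_less_cancel_iff[THEN iffD2]) (auto simp: field_simps)
        also have "\<dots> = 2 * L" unfolding L_def using ep by (simp add: ln_div ln_realpow)
        finally have a2L: "a < 2 * L" .
        have "a powr s \<le> (2 * L) powr s" using a2L a0 assms(1) by (intro powr_mono2) auto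
        also have "\<dots> = 2 powr s * L powr s" using Lp by (simp add: powr_mult)
        finally have aL: "a powr s \<le> 2 powr s * L powr s" .
        have "K * real d powr (1 - s) \<le> a powr s" using Kd dp unfolding a_def by (simp add: field_simps)
        then have "K * real d powr (1 - s) \<le> 2 powr s * L powr s" using aL by linarith
        then have "real d powr (1 - s) / L powr s \<le> 2 powr s / K"
          using Kp Lsp by (simp add: field_simps)
        also have "\<dots> = e / 2" unfolding K_def using e by (simp add: field_simps)
        finally have "real d powr (1 - s) / L powr s \<le> e / 2" .
        then show ?thesis using e by linarith
      qed
      then show "dist (real (d_eps \<gamma> \<epsilon>) powr (1 - s) / (ln (1 / \<epsilon>)) powr s) 0 < e"
        using fnn unfolding d_def L_def by simp
    qed
  qed
qed

end
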